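(* Let $n\ge3$ and $L>1$, and define $$\sigma_{0,2}=\frac{(n-2)(1+L^{n-1})}{L^{n-1}-L},\qquad \sigma_{2,1}=\frac{L^{n+2}(2+Ln)+(n+2L)-\sqrt{\left(L^{n+2}(2+Ln)+(n+2L)\right)^2-8Ln(L^{n+2}-1)^2}}{2L(L^{n+2}-1)}.$$ Then $\sigma_{2,1}\le\sigma_{0,2}$. *)

theory Defs
  imports Complex_Main
begin

end

theory Submission
  imports Defs
begin

lemma root_le:
  fixes A B C x \<Delta> :: real
  assumes A: "A > 0" and q: "A*x^2 - B*x + C \<le> 0" and D: "\<Delta> = B^2 - 4*A*C"
  shows "(B - sqrt \<Delta>) / (2*A) \<le> x"
proof -
  have "\<Delta> \<ge> (B - 2*A*x)^2"
  proof -
    have "4*A*C \<le> 4*A*(B*x - A*x^2)" using A q by (intro mult_left_mono) auto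
    then show ?thesis unfolding D by (simp add: power2_eq_square algebra_simps)
  qed
  then have "sqrt \<Delta> \<ge> \<bar>B - 2*A*x\<bar>"
    by (metis real_sqrt_abs real_sqrt_le_mono)
  then have "B - sqrt \<Delta> \<le> 2*A*x" by linarith
  then show ?thesis using A by (simp add: divide_le_eq mult.commute)
qed

theorem lemma2p4:
  fixes n :: nat and L :: real
  assumes "n \<ge> 3" and "L > 1"
  shows "(L ^ (n + 2) * (2 + L * real n) + (real n + 2 * L)
            - sqrt ((L ^ (n + 2) * (2 + L * real n) + (real n + 2 * L))\<^sup>2
                    - 8 * L * real n * (L ^ (n + 2) - 1)\<^sup>2))
           / (2 * L * (L ^ (n + 2) - 1))
         \<le> (real n - 2) * (1 + L ^ (n - 1)) / (L ^ (n - 1) - L)"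
proof -
  define a where "a = L ^ (n - 1)"
  define b where "b = L ^ (n + 2)"
  define B where "B = b * (2 + L * real n) + (real n + 2 * L)"
  define s where "s = (real n - 2) * (1 + a) / (a - L)"
  have nn: "n + 2 = (n - 1) + 3" using assms by simp
  have bab: "b = a * L^3" unfolding a_def b_def by (subst nn, simp add: power_add)
  have aL2: "a \<ge> L^2"
  proof -
    have "L^2 \<le> L^(n-1)" using assms by (intro power_increasing) auto
    then show ?thesis by (simp add: a_def)
  qed
  have L2: "L^2 > L" using assms by (simp add: power2_eq_square)
  have aL: "a - L > 0" using aL2 L2 by linarith
  have a1: "a > 1" using aL assms by linarith
  have bpos: "b - 1 > 0" unfolding bab using a1 assms
    by (metis diff_gt_0_iff_gt less_1_mult one_less_power zero_less_numeral)
  have Apos: "L * (b - 1) > 0" using bpos assms by simp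
  have Dlt: "8 * L * real n * (b - 1)^2 = 4 * (L*(b-1)) * (2 * real n * (b - 1))"
    by (simp add: power2_eq_square)
  have key: "\<And>x. L*(b-1)*x^2 - B*x + 2*real n*(b-1) \<le> 0 \<Longrightarrow>
     (B - sqrt (B^2 - 8 * L * real n * (b - 1)^2)) / (2 * L * (b - 1)) \<le> x"
  proof -
    fix x assume h: "L*(b-1)*x^2 - B*x + 2*real n*(b-1) \<le> 0"
    have "(B - sqrt (B^2 - 8 * L * real n * (b - 1)^2)) / (2 * (L * (b - 1))) \<le> x"
      by (rule root_le[OF Apos h]) (simp add: Dlt)
    then show "(B - sqrt (B^2 - 8 * L * real n * (b - 1)^2)) / (2 * L * (b - 1)) \<le> x"
      by (simp add: mult.assoc)
  qed
  have qid: "\<And>x. L*(b-1)*x^2 - B*x + 2*real n*(b-1) = b*(L*x-2)*(x - real n) - (L*x + real n)*(x+2)"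
    unfolding B_def by (simp add: power2_eq_square algebra_simps)
  have n3: "real n \<ge> 3" using assms by simp
  have spos: "s > 0" unfolding s_def using aL a1 n3 by simp
  have goal: "(B - sqrt (B^2 - 8 * L * real n * (b - 1)^2)) / (2 * L * (b - 1)) \<le> s"
  proof (cases "s \<ge> real n")
    case True
    have "L*(b-1)*(real n)^2 - B*(real n) + 2*real n*(b-1) \<le> 0"
      unfolding qid using assms n3 by (simp add: mult_nonneg_nonneg)
    then have "(B - sqrt (B^2 - 8 * L * real n * (b - 1)^2)) / (2 * L * (b - 1)) \<le> real n"
      by (rule key)
    then show ?thesis using True by linarith
  next
    case False
    have Ls: "L * s \<ge> 2"
    proof -
      have "2 * (a - L) \<le> L * ((real n - 2) * (1 + a))"
      proof (cases "n = 3")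
        case True
        have "a = L^2" unfolding a_def True by simp
        have "0 \<le> L*((L-1)*(L-1))" using assms by simp
        then show ?thesis using True assms \<open>a = L^2\<close>
          by (simp add: power2_eq_square algebra_simps)
      next
        case False
        then have "real n - 2 \<ge> 2" using assms by simp
        then have h1: "2 * (L * (1 + a)) \<le> L * ((real n - 2) * (1 + a))"
          using assms a1 mult_left_mono[of 2 "real n - 2" "L*(1+a)"]
          by (simp add: mult.left_commute mult.commute)
        have "1 + a \<le> L * (1 + a)" using assms a1 by simp
        note h1 this
        then show ?thesis using assms a1 by (smt (verit))
      qed
      then show ?thesis unfolding s_def using aL
        by (simp add: le_divide_eq mult.assoc)
    qed
    have "b*(L*s-2)*(s - real n) \<le> 0"
      using False Ls bpos by (intro mult_nonneg_nonpos) auto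
    moreover have "(L*s + real n)*(s+2) \<ge> 0" using spos assms by simp
    ultimately have "L*(b-1)*s^2 - B*s + 2*real n*(b-1) \<le> 0" unfolding qid by linarith
    then show ?thesis by (rule key)
  qed
  then show ?thesis unfolding B_def s_def a_def b_def by simp
qed

end
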